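(* Let $D$ be a strongly connected digraph with $n$ vertices and exactly three complementarity eigenvalues. If $D$ contains a subdigraph isomorphic to the $\theta$-digraph $\theta(a,b,c)$, then $n=a+b+c+2$.
   Context: All digraphs are finite, without loops and without multiple arcs. For a digraph $D$ with adjacency matrix $A$ (on $n$ vertices), a real $\lambda$ is a complementarity eigenvalue if there is a nonzero $x\in\mathbb{R}^n$, $x\ge0$, with $Ax-\lambda x\ge 0$ and $\langle x,Ax-\lambda x\rangle=0$. Subdigraphs need not be induced. The $\theta$-digraph $\theta(a,b,c)$ (integers $a,b,c\ge0$, $a\le b$, $b>0$) consists of two distinct vertices $v,w$ and three internally vertex-disjoint directed paths: two from $w$ to $v$ having $a+2$ and $b+2$ vertices, and one from $v$ to $w$ having $c+2$ vertices. *)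

theory Defs
  imports "HOL-Analysis.Analysis"
begin

text \<open>A digraph on the finite vertex type 'n is given by its arc set E; it is loopless
  when E is irreflexive. (No multiple arcs is automatic for a set of pairs.)\<close>

definition loopless :: "('n \<times> 'n) set \<Rightarrow> bool" where
  "loopless E \<longleftrightarrow> (\<forall>v. (v, v) \<notin> E)"

definition strongly_connected :: "('n \<times> 'n) set \<Rightarrow> bool" where
  "strongly_connected E \<longleftrightarrow> (\<forall>u v. (u, v) \<in> E\<^sup>*)"

definition adjacency_matrix :: "('n::finite \<times> 'n) set \<Rightarrow> real^'n^'n" where
  "adjacency_matrix E = (\<chi> i j. if (i, j) \<in> E then 1 else 0)"

definition complementarity_eigenvalue :: "real^'n^'n \<Rightarrow> real \<Rightarrow> bool" where
  "complementarity_eigenvalue A lam \<longleftrightarrow>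
     (\<exists>x :: real^'n. x \<noteq> 0 \<and> (\<forall>i. x $ i \<ge> 0) \<and>
        (\<forall>i. (A *v x - lam *\<^sub>R x) $ i \<ge> 0) \<and> x \<bullet> (A *v x - lam *\<^sub>R x) = 0)"

text \<open>The theta digraph theta(a,b,c) on vertices {0..<a+b+c+2}: vertex 0 is v, vertex 1 is w;
  two directed paths from w to v with internal vertices [2..<a+2] resp. [a+2..<a+b+2],
  and one directed path from v to w with internal vertices [a+b+2..<a+b+c+2].\<close>

fun path_arcs :: "'a list \<Rightarrow> ('a \<times> 'a) set" where
  "path_arcs (x # y # zs) = insert (x, y) (path_arcs (y # zs))"
| "path_arcs _ = {}"

definition theta_vertices :: "nat \<Rightarrow> nat \<Rightarrow> nat \<Rightarrow> nat set" where
  "theta_vertices a b c = {0..<a+b+c+2}"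

definition theta_arcs :: "nat \<Rightarrow> nat \<Rightarrow> nat \<Rightarrow> (nat \<times> nat) set" where
  "theta_arcs a b c =
     path_arcs ([1] @ [2..<a+2] @ [0]) \<union>
     path_arcs ([1] @ [a+2..<a+b+2] @ [0]) \<union>
     path_arcs ([0] @ [a+b+2..<a+b+c+2] @ [1])"

definition contains_theta :: "('n \<times> 'n) set \<Rightarrow> nat \<Rightarrow> nat \<Rightarrow> nat \<Rightarrow> bool" where
  "contains_theta E a b c \<longleftrightarrow>
     (\<exists>f :: nat \<Rightarrow> 'n. inj_on f (theta_vertices a b c) \<and>
        (\<forall>(x, y) \<in> theta_arcs a b c. (f x, f y) \<in> E))"

end

theory Submission
  imports Defs
begin


lemma mv_eq: "(adjacency_matrix E *v x) $ i = (\<Sum>j\<in>UNIV. if (i,j)\<in>E then x$j else 0)"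
  unfolding adjacency_matrix_def matrix_vector_mult_def by (auto intro: sum.cong)

lemma mv_nonneg: "\<forall>j. x$j \<ge> 0 \<Longrightarrow> (adjacency_matrix E *v x)$i \<ge> (0::real)"
  by (simp add: mv_eq sum_nonneg)

lemma mv_ge_term:
  assumes "\<forall>j. x$j \<ge> (0::real)" "(i,j)\<in>E"
  shows "x$j \<le> (adjacency_matrix E *v x)$i"
proof -
  have "(\<lambda>j. if (i,j)\<in>E then x$j else 0) j \<le> (\<Sum>j\<in>UNIV. if (i,j)\<in>E then x$j else 0)"
    by (rule member_le_sum) (use assms in auto)
  then show ?thesis using assms by (simp add: mv_eq)
qed

lemma ce_intro:
  fixes x :: "real^'n::finite"
  assumes "\<forall>i. x$i \<ge> 0" "x \<noteq> 0" "\<forall>i. x$i > 0 \<longrightarrow> (adjacency_matrix E *v x)$i = lam * x$i"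
  shows "complementarity_eigenvalue (adjacency_matrix E) lam"
  unfolding complementarity_eigenvalue_def
proof (intro exI conjI allI)
  show "x \<noteq> 0" "\<And>i. 0 \<le> x$i" using assms by auto
  have t: "x$i * (adjacency_matrix E *v x - lam *\<^sub>R x)$i = 0" for i
    using assms(1,3) by (cases "x$i > 0") (auto simp: order.order_iff_strict)
  show "0 \<le> (adjacency_matrix E *v x - lam *\<^sub>R x) $ i" for i
  proof (cases "x$i > 0")
    case True then show ?thesis using assms by simp
  next
    case False then have "x$i = 0" using assms(1) by (metis less_eq_real_def)
    then show ?thesis using mv_nonneg[of x E i] assms(1) by simp
  qed
  show "x \<bullet> (adjacency_matrix E *v x - lam *\<^sub>R x) = 0"
    unfolding inner_vec_def using t by (intro sum.neutral) auto
qed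

lemma cmp:
  fixes x y :: "real^'n::finite"
  assumes SU: "S \<subseteq> U" "S \<noteq> U" "S \<noteq> {}"
    and sc: "\<forall>u\<in>U. \<forall>v\<in>U. (u,v) \<in> (Restr E U)\<^sup>*"
    and xpos: "\<forall>i\<in>S. x$i > 0" and xz: "\<forall>i. i \<notin> S \<longrightarrow> x$i = 0"
    and xe: "\<forall>i\<in>S. (adjacency_matrix E *v x)$i = lam * x$i"
    and ypos: "\<forall>i\<in>U. y$i > 0" and yz: "\<forall>i. i \<notin> U \<longrightarrow> y$i = 0"
    and ye: "\<forall>i\<in>U. (adjacency_matrix E *v y)$i = mu * y$i"
  shows "lam < mu"
proof (rule ccontr)
  assume "\<not> lam < mu"
  hence lm: "mu \<le> lam" by simp
  have finS: "finite S" by simp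
  define t where "t = Max ((\<lambda>i. x$i / y$i) ` S)"
  obtain i0 where i0: "i0 \<in> S" "t = x$i0 / y$i0"
  proof -
    have "t \<in> (\<lambda>i. x$i / y$i) ` S" unfolding t_def using SU(3) by (intro Max_in) auto
    then show ?thesis using that by auto
  qed
  have tge: "x$i / y$i \<le> t" if "i \<in> S" for i
    unfolding t_def using that by (intro Max_ge) auto
  have tpos: "t > 0" using i0 xpos ypos SU by (auto intro!: divide_pos_pos)
  define z where "z = t *\<^sub>R y - x"
  have y0: "\<forall>j. y$j \<ge> 0" using ypos yz by (metis less_eq_real_def)
  have x0: "\<forall>j. x$j \<ge> 0" using xpos xz by (metis less_eq_real_def)
  have z0: "\<forall>j. z$j \<ge> 0"
  proof
    fix j show "z$j \<ge> 0"
    proof (cases "j \<in> S")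
      case True
      then have "y$j > 0" using SU ypos by auto
      then show ?thesis using tge[OF True] by (simp add: z_def pos_divide_le_eq)
    next
      case False then show ?thesis using xz y0 tpos by (simp add: z_def)
    qed
  qed
  have closed: "z$j = 0" if "i \<in> U" "z$i = 0" "(i,j) \<in> E" for i j
  proof -
    have iS: "i \<in> S"
    proof (rule ccontr)
      assume "i \<notin> S"
      then have "z$i = t * y$i" using xz by (simp add: z_def)
      moreover have "y$i > 0" using ypos that by auto
      ultimately show False using tpos that by simp
    qed
    have xi: "x$i = t * y$i" using that by (simp add: z_def)
    have "(adjacency_matrix E *v z)$i = t * (adjacency_matrix E *v y)$i - (adjacency_matrix E *v x)$i"
      by (simp add: z_def matrix_vector_mult_diff_distrib matrix_vector_mult_scaleR)
    also have "\<dots> = mu * x$i - lam * x$i" using ye xe iS SU xi by auto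
    also have "\<dots> \<le> 0" using lm xpos iS by (simp add: mult_right_mono)
    finally have "(adjacency_matrix E *v z)$i \<le> 0" .
    moreover have "z$j \<le> (adjacency_matrix E *v z)$i" by (rule mv_ge_term[OF z0 that(3)])
    ultimately show ?thesis using z0 by (meson order_antisym order_trans)
  qed
  have "i0 \<in> U" using i0 SU by auto
  have "y$i0 > 0" using i0 ypos SU by auto
  then have zi0: "z$i0 = 0" using i0 by (simp add: z_def)
  have allz: "z$v = 0 \<and> v \<in> U" if "(i0, v) \<in> (Restr E U)\<^sup>*" for v
    using that
  proof (induction rule: rtrancl_induct)
    case base then show ?case using zi0 \<open>i0 \<in> U\<close> by simp
  next
    case (step u v) then show ?case using closed by auto
  qed
  obtain v where v: "v \<in> U" "v \<notin> S" using SU by auto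
  have "z$v = 0" using allz sc \<open>i0 \<in> U\<close> v by blast
  moreover have "z$v = t * y$v" using xz v by (simp add: z_def)
  moreover have "y$v > 0" using ypos v by auto
  ultimately show False using tpos by simp
qed



lemma perron_exists:
  fixes E :: "('n::finite \<times> 'n) set"
  assumes Une: "U \<noteq> {}" and sc: "\<forall>u\<in>U. \<forall>v\<in>U. (u,v) \<in> (Restr E U)\<^sup>*"
  shows "\<exists>(y::real^'n) lam. (\<forall>i\<in>U. y$i > 0) \<and> (\<forall>i. i\<notin>U \<longrightarrow> y$i = 0) \<and>
           (\<forall>i\<in>U. (adjacency_matrix E *v y)$i = lam * y$i)"
proof -
  define M :: "real^'n^'n" where
    "M = (\<chi> i j. if i\<in>U then (if i = j then 1 else 0) + (if (i,j)\<in>E then 1 else 0) else 0)"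
  have Mv: "(M *v y)$i = (if i\<in>U then y$i + (adjacency_matrix E *v y)$i else 0)" for y i
  proof (cases "i \<in> U")
    case True
    have "(M *v y)$i = (\<Sum>j\<in>UNIV. (if i = j then y$j else 0) + (if (i,j)\<in>E then y$j else 0))"
      unfolding M_def matrix_vector_mult_def using True by (auto intro!: sum.cong simp: distrib_right)
    also have "\<dots> = y$i + (adjacency_matrix E *v y)$i"
      by (simp add: sum.distrib mv_eq)
    finally show ?thesis using True by simp
  next
    case False then show ?thesis unfolding M_def matrix_vector_mult_def by simp
  qed
  define K where "K = {y::real^'n. (\<forall>i. 0 \<le> y$i) \<and> (\<forall>i. i\<notin>U \<longrightarrow> y$i = 0) \<and> (\<Sum>i\<in>UNIV. y$i) = 1}"
  define s where "s y = (\<Sum>i\<in>UNIV. (M *v y)$i)" for y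
  have Mnn: "(M *v y)$i \<ge> 0" if "y \<in> K" for y i
    using that mv_nonneg[of y E i] by (auto simp: Mv K_def)
  have sge: "s y \<ge> 1" if "y \<in> K" for y
  proof -
    have "1 = (\<Sum>i\<in>UNIV. y$i)" using that by (simp add: K_def)
    also have "\<dots> \<le> s y" unfolding s_def
    proof (rule sum_mono)
      fix i show "y$i \<le> (M *v y)$i"
        using that mv_nonneg[of y E i] by (auto simp: Mv K_def)
    qed
    finally show ?thesis .
  qed
  have "compact K"
  proof (rule compact_eq_bounded_closed[THEN iffD2], rule conjI)
    have "K \<subseteq> cbox 0 1"
    proof
      fix y assume y: "y \<in> K"
      have "y$i \<le> 1" for i
      proof -
        have "y$i \<le> (\<Sum>i\<in>UNIV. y$i)" by (rule member_le_sum) (use y in \<open>auto simp: K_def\<close>)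
        then show ?thesis using y by (simp add: K_def)
      qed
      then show "y \<in> cbox 0 1" using y by (auto simp: mem_box_cart K_def)
    qed
    then show "bounded K" using bounded_cbox bounded_subset by blast
    have KK: "K = {y. \<forall>i. 0 \<le> y$i} \<inter> {y. \<forall>i. i\<notin>U \<longrightarrow> y$i = 0} \<inter> {y::real^'n. (\<Sum>i\<in>UNIV. y$i) = 1}"
      by (auto simp: K_def)
    have c1: "closed {y::real^'n. \<forall>i. 0 \<le> y$i}"
      by (intro closed_Collect_all closed_Collect_le continuous_intros)
    have c2: "closed {y::real^'n. \<forall>i. i\<notin>U \<longrightarrow> y$i = 0}"
      by (intro closed_Collect_all closed_Collect_imp closed_Collect_eq continuous_intros) auto
    have c3: "closed {y::real^'n. (\<Sum>i\<in>UNIV. y$i) = 1}"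
      by (intro closed_Collect_eq continuous_intros)
    show "closed K" unfolding KK by (intro closed_Int c1 c2 c3)
  qed
  moreover have "convex K"
    unfolding convex_def K_def
  proof (intro ballI allI impI conjI)
    fix x y :: "real^'n" and u v :: real
    assume x: "x \<in> {y. (\<forall>i. 0 \<le> y $ i) \<and> (\<forall>i. i \<notin> U \<longrightarrow> y $ i = 0) \<and> (\<Sum>i\<in>UNIV. y $ i) = 1}"
      and y: "y \<in> {y. (\<forall>i. 0 \<le> y $ i) \<and> (\<forall>i. i \<notin> U \<longrightarrow> y $ i = 0) \<and> (\<Sum>i\<in>UNIV. y $ i) = 1}"
      and uv: "0 \<le> u" "0 \<le> v" "u + v = 1"
    have "(\<Sum>i\<in>UNIV. (u *\<^sub>R x + v *\<^sub>R y) $ i) = u * (\<Sum>i\<in>UNIV. x $ i) + v * (\<Sum>i\<in>UNIV. y $ i)"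
      by (simp add: sum.distrib sum_distrib_left)
    then show "u *\<^sub>R x + v *\<^sub>R y \<in> {y. (\<forall>i. 0 \<le> y $ i) \<and> (\<forall>i. i \<notin> U \<longrightarrow> y $ i = 0) \<and> (\<Sum>i\<in>UNIV. y $ i) = 1}"
      using x y uv by simp
  qed
  moreover obtain u where "u \<in> U" using Une by auto
  then have "axis u 1 \<in> K" by (auto simp: K_def axis_def)
  then have "K \<noteq> {}" by auto
  moreover have "continuous_on K (\<lambda>y. (1 / s y) *\<^sub>R (M *v y))"
  proof -
    have cs: "continuous_on K s" unfolding s_def by (intro continuous_intros)
    show ?thesis
      by (intro continuous_on_scaleR continuous_on_divide continuous_on_const cs
          matrix_vector_mult_linear_continuous_on) (use sge in fastforce)
  qed
  moreover have "(\<lambda>y. (1 / s y) *\<^sub>R (M *v y)) \<in> K \<rightarrow> K"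
  proof
    fix y assume y: "y \<in> K"
    have sp: "s y > 0" using sge[OF y] by simp
    have "(\<Sum>i\<in>UNIV. (1 / s y) * (M *v y)$i) = 1"
      using sp unfolding sum_distrib_left[symmetric] by (simp add: s_def)
    then show "(1 / s y) *\<^sub>R (M *v y) \<in> K"
      using Mnn[OF y] sp by (auto simp: K_def Mv)
  qed
  ultimately obtain y where y: "y \<in> K" "(1 / s y) *\<^sub>R (M *v y) = y"
    by (rule brouwer)
  have sp: "s y > 0" using sge[OF y(1)] by simp
  have eig: "(adjacency_matrix E *v y)$i = (s y - 1) * y$i" if "i \<in> U" for i
  proof -
    have "(1 / s y) * (y$i + (adjacency_matrix E *v y)$i) = y$i"
    proof -
      have "((1 / s y) *\<^sub>R (M *v y))$i = y$i" using y(2) by simp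
      then show ?thesis using that by (simp only: vector_scaleR_component Mv if_True real_scaleR_def)
    qed
    then have "y$i + (adjacency_matrix E *v y)$i = s y * y$i" using sp by (auto simp: field_simps)
    then show ?thesis by (simp add: algebra_simps)
  qed
  have pos: "y$i > 0" if "i \<in> U" for i
  proof (rule ccontr)
    assume "\<not> y$i > 0"
    then have yi: "y$i = 0" using y(1) by (simp add: K_def less_eq_real_def) (metis less_eq_real_def)
    have y0: "\<forall>j. y$j \<ge> 0" using y(1) by (simp add: K_def)
    have "y$v = 0 \<and> v \<in> U" if "(i, v) \<in> (Restr E U)\<^sup>*" for v
      using that
    proof (induction rule: rtrancl_induct)
      case base then show ?case using yi \<open>i \<in> U\<close> by simp
    next
      case (step u v)
      then have "y$v \<le> (adjacency_matrix E *v y)$u" using mv_ge_term[OF y0] by auto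
      also have "\<dots> = 0" using eig step by auto
      finally have "y$v \<le> 0" .
      moreover have "v \<in> U" using step(2) by auto
      ultimately show ?case using y0 by (meson order_antisym)
    qed
    then have "\<forall>v\<in>U. y$v = 0" using sc \<open>i \<in> U\<close> by blast
    then have "\<forall>v. y$v = 0" using y(1) by (auto simp: K_def)
    then have "(\<Sum>i\<in>UNIV. y$i) = 0" by simp
    then show False using y(1) by (simp add: K_def)
  qed
  show ?thesis
    using pos eig y(1) by (auto simp: K_def)
qed



lemma path_arcs_map: "path_arcs (map f p) = (\<lambda>(x,y). (f x, f y)) ` path_arcs p"
  by (induction p rule: path_arcs.induct) auto

lemma path_arcs_set: "path_arcs p \<subseteq> set p \<times> set p"
  by (induction p rule: path_arcs.induct) auto

lemma path_reach: "path_arcs p \<subseteq> R \<Longrightarrow> u \<in> set p \<Longrightarrow> (hd p, u) \<in> R\<^sup>* \<and> (u, last p) \<in> R\<^sup>*"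
proof (induction p arbitrary: u rule: path_arcs.induct)
  case (1 x y zs)
  have xy: "(x,y) \<in> R" using 1 by auto
  have IH: "\<And>u. u \<in> set (y # zs) \<Longrightarrow> (y, u) \<in> R\<^sup>* \<and> (u, last (y # zs)) \<in> R\<^sup>*"
    using 1 by auto
  show ?case
  proof (cases "u = x")
    case True
    then show ?thesis using IH[of y] xy by (auto intro: converse_rtrancl_into_rtrancl)
  next
    case False
    then have "u \<in> set (y # zs)" using 1 by auto
    then show ?thesis using IH xy by (auto intro: converse_rtrancl_into_rtrancl)
  qed
qed auto

lemma mapped_path:
  assumes "path_arcs p \<subseteq> theta_arcs a b c" "\<forall>(x,y)\<in>theta_arcs a b c. (f x, f y) \<in> E" "set p \<subseteq> I"
  shows "path_arcs (map f p) \<subseteq> Restr E (f ` I)"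
  using assms path_arcs_set[of p] unfolding path_arcs_map by fastforce

lemma theta_sc:
  assumes "path_arcs q1 \<subseteq> R" "path_arcs q2 \<subseteq> R" "path_arcs q3 \<subseteq> R"
    "hd q1 = w" "last q1 = v" "hd q2 = w" "last q2 = v" "hd q3 = v" "last q3 = w"
    "q1 \<noteq> []" "q3 \<noteq> []"
  shows "\<forall>u\<in>set q1 \<union> set q2 \<union> set q3. \<forall>u'\<in>set q1 \<union> set q2 \<union> set q3. (u,u') \<in> R\<^sup>*"
proof -
  have wv: "(w,v) \<in> R\<^sup>*" using path_reach[OF assms(1) last_in_set[OF assms(10)]] assms(4,5) by simp
  have vw: "(v,w) \<in> R\<^sup>*" using path_reach[OF assms(3) last_in_set[OF assms(11)]] assms(8,9) by simp
  have hub: "(u,v) \<in> R\<^sup>* \<and> (v,u) \<in> R\<^sup>*" if "u \<in> set q1 \<union> set q2 \<union> set q3" for u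
    using that path_reach[OF assms(1), of u] path_reach[OF assms(2), of u] path_reach[OF assms(3), of u]
      assms wv vw by (auto intro: rtrancl_trans)
  show ?thesis using hub by (meson rtrancl_trans)
qed

lemma ce_from:
  fixes y :: "real^'n::finite"
  assumes "U \<noteq> {}" "\<forall>i\<in>U. y$i > 0" "\<forall>i. i \<notin> U \<longrightarrow> y$i = 0"
    "\<forall>i\<in>U. (adjacency_matrix E *v y)$i = l * y$i"
  shows "complementarity_eigenvalue (adjacency_matrix E) l"
proof (rule ce_intro)
  show "\<forall>i. 0 \<le> y $ i" using assms by (metis less_eq_real_def)
  obtain u where "u \<in> U" using assms by auto
  then show "y \<noteq> 0" using assms by auto
  show "\<forall>i. 0 < y $ i \<longrightarrow> (adjacency_matrix E *v y) $ i = l * y $ i"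
    using assms by (metis less_irrefl)
qed

theorem mainTheorem6:
  fixes E :: "('n::finite \<times> 'n) set" and a b c :: nat
  assumes "loopless E"
    and "strongly_connected E"
    and "card {lam. complementarity_eigenvalue (adjacency_matrix E) lam} = 3"
    and "a \<le> b" and "0 < b"
    and "contains_theta E a b c"
  shows "CARD('n) = a + b + c + 2"
proof (rule ccontr)
  assume neq: "CARD('n) \<noteq> a + b + c + 2"
  define N where "N = a + b + c + 2"
  obtain f :: "nat \<Rightarrow> 'n" where inj: "inj_on f {0..<N}"
    and arcs: "\<forall>(x,y)\<in>theta_arcs a b c. (f x, f y) \<in> E"
    using assms(6) unfolding contains_theta_def theta_vertices_def N_def by blast
  define p1 where "p1 = [1] @ [2..<a+2] @ [0::nat]"
  define p2 where "p2 = [1] @ [a+2..<a+b+2] @ [0::nat]"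
  define p3 where "p3 = [0] @ [a+b+2..<N] @ [1::nat]"
  have pa: "path_arcs p1 \<subseteq> theta_arcs a b c" "path_arcs p2 \<subseteq> theta_arcs a b c"
    "path_arcs p3 \<subseteq> theta_arcs a b c"
    unfolding theta_arcs_def p1_def p2_def p3_def N_def by auto
  have s1: "set p1 = {0,1} \<union> {2..<a+2}" unfolding p1_def by auto
  have s2: "set p2 = {0,1} \<union> {a+2..<a+b+2}" unfolding p2_def by auto
  have s3: "set p3 = {0,1} \<union> {a+b+2..<N}" unfolding p3_def by auto
  have sall: "set p1 \<union> set p2 \<union> set p3 = {0..<N}" unfolding s1 s2 s3 N_def by auto
  have hl: "hd (map f p1) = f 1" "last (map f p1) = f 0" "hd (map f p2) = f 1" "last (map f p2) = f 0"
    "hd (map f p3) = f 0" "last (map f p3) = f 1" "map f p1 \<noteq> []" "map f p3 \<noteq> []"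
    by (simp_all add: p1_def p2_def p3_def)
  define I1 where "I1 = set p1 \<union> set p3"
  define U1 where "U1 = f ` I1"
  define T where "T = f ` {0..<N}"
  have I1N: "I1 \<subseteq> {0..<N}" using sall I1_def by auto
  have sc1: "\<forall>u\<in>U1. \<forall>v\<in>U1. (u,v) \<in> (Restr E U1)\<^sup>*"
  proof -
    have "\<forall>u\<in>set (map f p1) \<union> set (map f p1) \<union> set (map f p3).
        \<forall>u'\<in>set (map f p1) \<union> set (map f p1) \<union> set (map f p3). (u,u') \<in> (Restr E U1)\<^sup>*"
    proof -
      have m1: "path_arcs (map f p1) \<subseteq> Restr E U1" unfolding U1_def
        by (rule mapped_path[OF pa(1) arcs]) (simp add: I1_def)
      have m3: "path_arcs (map f p3) \<subseteq> Restr E U1" unfolding U1_def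
        by (rule mapped_path[OF pa(3) arcs]) (simp add: I1_def)
      show ?thesis by (rule theta_sc[OF m1 m1 m3 hl(1,2,1,2,5,6,7,8)])
    qed
    then show ?thesis unfolding U1_def I1_def by auto
  qed
  have scT: "\<forall>u\<in>T. \<forall>v\<in>T. (u,v) \<in> (Restr E T)\<^sup>*"
  proof -
    have "\<forall>u\<in>set (map f p1) \<union> set (map f p2) \<union> set (map f p3).
        \<forall>u'\<in>set (map f p1) \<union> set (map f p2) \<union> set (map f p3). (u,u') \<in> (Restr E T)\<^sup>*"
    proof -
      have m1: "path_arcs (map f p1) \<subseteq> Restr E T" unfolding T_def
        by (rule mapped_path[OF pa(1) arcs]) (use sall in auto)
      have m2: "path_arcs (map f p2) \<subseteq> Restr E T" unfolding T_def
        by (rule mapped_path[OF pa(2) arcs]) (use sall in auto)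
      have m3: "path_arcs (map f p3) \<subseteq> Restr E T" unfolding T_def
        by (rule mapped_path[OF pa(3) arcs]) (use sall in auto)
      show ?thesis by (rule theta_sc[OF m1 m2 m3 hl])
    qed
    then show ?thesis unfolding T_def sall[symmetric] by auto
  qed
  have scV: "\<forall>u\<in>UNIV. \<forall>v\<in>UNIV. (u,v) \<in> (Restr E UNIV)\<^sup>*"
    using assms(2) unfolding strongly_connected_def by simp
  have NN: "0 < N" "1 < N" "a + 2 < N" unfolding N_def using assms(5) by auto
  have f01: "f 0 \<noteq> f 1" using inj NN by (auto dest: inj_onD)
  have U1a: "{f 0} \<subseteq> U1" "{f 0} \<noteq> U1" "{f 0} \<noteq> {}"
    using f01 unfolding U1_def I1_def s1 s3 by auto
  have fa: "f (a+2) \<notin> U1"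
  proof
    assume "f (a+2) \<in> U1"
    then obtain k where k: "k \<in> I1" "f (a+2) = f k" unfolding U1_def by auto
    then have "a + 2 = k" using inj I1N NN by (auto dest: inj_onD)
    then show False using k(1) assms(5) unfolding I1_def s1 s3 by auto
  qed
  have U1T: "U1 \<subseteq> T" "U1 \<noteq> T" "U1 \<noteq> {}"
    using I1N fa NN U1a unfolding U1_def T_def by auto
  have cardT: "card T = N" unfolding T_def using card_image[OF inj] by simp
  have TV: "T \<noteq> UNIV" "T \<noteq> {}"
    using cardT neq NN unfolding N_def T_def by auto
  define x0 :: "real^'n" where "x0 = axis (f 0) 1"
  have x0p: "\<forall>i\<in>{f 0}. x0$i > 0" "\<forall>i. i \<notin> {f 0} \<longrightarrow> x0$i = 0"
    by (auto simp: x0_def axis_def)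
  have x0e: "\<forall>i\<in>{f 0}. (adjacency_matrix E *v x0)$i = 0 * x0$i"
  proof -
    have "(adjacency_matrix E *v x0)$(f 0) = 0"
      unfolding mv_eq
      using assms(1) by (intro sum.neutral) (auto simp: x0_def axis_def loopless_def)
    then show ?thesis by simp
  qed
  obtain y1 l1 where y1: "\<forall>i\<in>U1. y1$i > 0" "\<forall>i. i\<notin>U1 \<longrightarrow> y1$i = 0"
    "\<forall>i\<in>U1. (adjacency_matrix E *v y1)$i = l1 * y1$i"
    using perron_exists[OF U1T(3) sc1] by blast
  obtain y2 l2 where y2: "\<forall>i\<in>T. y2$i > 0" "\<forall>i. i\<notin>T \<longrightarrow> y2$i = 0"
    "\<forall>i\<in>T. (adjacency_matrix E *v y2)$i = l2 * y2$i"
    using perron_exists[OF TV(2) scT] by blast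
  obtain y3 l3 where y3: "\<forall>i\<in>(UNIV::'n set). y3$i > 0" "\<forall>i. i\<notin>(UNIV::'n set) \<longrightarrow> y3$i = 0"
    "\<forall>i\<in>(UNIV::'n set). (adjacency_matrix E *v y3)$i = l3 * y3$i"
    using perron_exists[OF _ scV] by blast
  have lt1: "0 < l1" by (rule cmp[OF U1a sc1 x0p x0e y1])
  have lt2: "l1 < l2" by (rule cmp[OF U1T scT y1 y2])
  have lt3: "l2 < l3" by (rule cmp[OF _ TV(1) TV(2) scV y2 y3]) simp
  define L where "L = {lam. complementarity_eigenvalue (adjacency_matrix E) lam}"
  have inL: "0 \<in> L" "l1 \<in> L" "l2 \<in> L" "l3 \<in> L"
    unfolding L_def using ce_from[OF _ x0p x0e] ce_from[OF U1T(3) y1] ce_from[OF TV(2) y2]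
      ce_from[OF _ y3] by auto
  have finL: "finite L" using assms(3) unfolding L_def by (metis card.infinite zero_neq_numeral)
  have "card {0, l1, l2, l3} \<le> card L" using inL finL by (intro card_mono) auto
  moreover have "card {0, l1, l2, l3} = 4" using lt1 lt2 lt3 by auto
  ultimately show False using assms(3) unfolding L_def by simp
qed

end
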